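(* Let $\theta>0$ and let $X_1,X_2$ be independent Ornstein–Uhlenbeck processes $X_i(t)=\int_0^te^{-\theta(t-u)}dW^i(u)$ driven by independent standard Brownian motions. Let $(\Delta_n)_{n\ge1}$ be positive numbers with $\Delta_n\to0$ and $T_n:=n\Delta_n\to\infty$, and let $t_k:=k\Delta_n$. Set $$A(n):=\frac{\sqrt{T_n}}{n}\sum_{k=0}^{n-1}X_1(t_k)X_2(t_k),\qquad F_{T_n}:=\frac{1}{\sqrt{T_n}}\int_0^{T_n}X_1(t)X_2(t)dt,\qquad \delta(n):=A(n)-F_{T_n}.$$ Then, with $C_\theta:=4\max\big(\frac{8}{9\theta},\frac{\sqrt2}{3}\theta^{-1/2},\frac14\big)$, for every $n$ with $\Delta_n\le 1$, $$\mathbf E[\delta(n)^2]\le C_\theta\, n\Delta_n^2.$$ In particular, if $n\Delta_n^2\to0$ then $\mathbf E[\delta(n)^2]\to0$. *)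

theory Defs
  imports "HOL-Probability.Probability"
begin

definition std_brownian_motion :: "'a measure \<Rightarrow> (real \<Rightarrow> 'a \<Rightarrow> real) \<Rightarrow> bool" where
  "std_brownian_motion M W \<longleftrightarrow>
     prob_space M \<and>
     (\<forall>t. W t \<in> borel_measurable M) \<and>
     (\<forall>\<omega>\<in>space M. W 0 \<omega> = 0 \<and> continuous_on {0..} (\<lambda>t. W t \<omega>)) \<and>
     (\<forall>s t. 0 \<le> s \<longrightarrow> s < t \<longrightarrow>
        distributed M lborel (\<lambda>\<omega>. W t \<omega> - W s \<omega>) (normal_density 0 (sqrt (t - s)))) \<and>
     (\<forall>(ts :: nat \<Rightarrow> real) k. 0 \<le> ts 0 \<longrightarrow> (\<forall>i<k. ts i < ts (Suc i)) \<longrightarrow>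
        prob_space.indep_vars M (\<lambda>_. borel) (\<lambda>i \<omega>. W (ts (Suc i)) \<omega> - W (ts i) \<omega>) {..<k})"

definition indep_processes :: "'a measure \<Rightarrow> (real \<Rightarrow> 'a \<Rightarrow> real) \<Rightarrow> (real \<Rightarrow> 'a \<Rightarrow> real) \<Rightarrow> bool" where
  "indep_processes M W1 W2 \<longleftrightarrow>
     (\<forall>J. finite J \<longrightarrow> J \<subseteq> {0..} \<longrightarrow>
        prob_space.indep_var M
          (PiM J (\<lambda>_. borel)) (\<lambda>\<omega>. restrict (\<lambda>t. W1 t \<omega>) J)
          (PiM J (\<lambda>_. borel)) (\<lambda>\<omega>. restrict (\<lambda>t. W2 t \<omega>) J))"

text \<open>Ornstein--Uhlenbeck process X(t) = \<integral>_0^t e^{-\<theta>(t-u)} dW(u), with the Wiener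
  integral of the deterministic C^1 integrand f(u) = e^{-\<theta>(t-u)} given pathwise
  (Paley--Wiener) by f(t) W(t) - \<integral>_0^t f'(u) W(u) du, f'(u) = \<theta> e^{-\<theta>(t-u)}.\<close>
definition ou_process :: "real \<Rightarrow> (real \<Rightarrow> 'a \<Rightarrow> real) \<Rightarrow> real \<Rightarrow> 'a \<Rightarrow> real" where
  "ou_process \<theta> W t \<omega> = W t \<omega> - integral {0..t} (\<lambda>u. \<theta> * exp (- \<theta> * (t - u)) * W u \<omega>)"

definition A_riemann :: "real \<Rightarrow> (real \<Rightarrow> 'a \<Rightarrow> real) \<Rightarrow> (real \<Rightarrow> 'a \<Rightarrow> real) \<Rightarrow> real \<Rightarrow> nat \<Rightarrow> 'a \<Rightarrow> real" where
  "A_riemann \<theta> W1 W2 d n \<omega> =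
     sqrt (real n * d) / real n *
     (\<Sum>k<n. ou_process \<theta> W1 (real k * d) \<omega> * ou_process \<theta> W2 (real k * d) \<omega>)"

definition F_integral :: "real \<Rightarrow> (real \<Rightarrow> 'a \<Rightarrow> real) \<Rightarrow> (real \<Rightarrow> 'a \<Rightarrow> real) \<Rightarrow> real \<Rightarrow> 'a \<Rightarrow> real" where
  "F_integral \<theta> W1 W2 T \<omega> =
     1 / sqrt T * integral {0..T} (\<lambda>t. ou_process \<theta> W1 t \<omega> * ou_process \<theta> W2 t \<omega>)"

definition delta_err :: "real \<Rightarrow> (real \<Rightarrow> 'a \<Rightarrow> real) \<Rightarrow> (real \<Rightarrow> 'a \<Rightarrow> real) \<Rightarrow> real \<Rightarrow> nat \<Rightarrow> 'a \<Rightarrow> real" where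
  "delta_err \<theta> W1 W2 d n \<omega> = A_riemann \<theta> W1 W2 d n \<omega> - F_integral \<theta> W1 W2 (real n * d) \<omega>"

definition C_theta :: "real \<Rightarrow> real" where
  "C_theta \<theta> = 4 * max (8 / (9 * \<theta>)) (max (sqrt 2 / 3 * \<theta> powr (-1/2)) (1/4))"

end

theory Submission
  imports Defs
begin

lemma integral_split_cells:
  fixes g :: "real \<Rightarrow> real"
  assumes "0 \<le> h" "continuous_on {a..a + real N * h} g"
  shows "integral {a..a + real N * h} g = (\<Sum>j<N. integral {a + real j * h..a + real (Suc j) * h} g)"
  using assms(2)
proof (induction N)
  case 0
  then show ?case by simp
next
  case (Suc N)
  have sub: "{a..a + real N * h} \<subseteq> {a..a + real (Suc N) * h}"
    using assms(1) by (auto simp: algebra_simps)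
  have c: "continuous_on {a..a + real N * h} g"
    using Suc.prems continuous_on_subset[OF _ sub] by blast
  have "integral {a..a + real N * h} g + integral {a + real N * h..a + real (Suc N) * h} g
      = integral {a..a + real (Suc N) * h} g"
    by (rule Henstock_Kurzweil_Integration.integral_combine) (use assms(1) Suc.prems in \<open>auto intro!: integrable_continuous_interval simp: algebra_simps\<close>)
  then show ?case using Suc.IH[OF c] by simp
qed

lemma riemann_left:
  fixes g :: "real \<Rightarrow> real"
  assumes ab: "a \<le> b" and cont: "continuous_on {a..b} g"
  shows "(\<lambda>N. \<Sum>j<N. (b - a) / real N * g (a + real j * ((b - a) / real N))) \<longlonglongrightarrow> integral {a..b} g"
proof (rule LIMSEQ_I)
  fix r :: real assume r: "0 < r"
  define e where "e = r / (b - a + 1)"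
  have e: "0 < e" using r ab by (simp add: e_def)
  have uc: "uniformly_continuous_on {a..b} g"
    using compact_uniformly_continuous[OF cont] by simp
  then obtain d where d: "0 < d" and dd: "\<And>x x'. x \<in> {a..b} \<Longrightarrow> x' \<in> {a..b} \<Longrightarrow> dist x' x < d \<Longrightarrow> dist (g x') (g x) < e"
    unfolding uniformly_continuous_on_def using e by metis
  obtain N0 :: nat where N0: "(b - a) / d < real N0" using reals_Archimedean2 by blast
  show "\<exists>no. \<forall>N\<ge>no. norm ((\<Sum>j<N. (b - a) / real N * g (a + real j * ((b - a) / real N))) - integral {a..b} g) < r"
  proof (intro exI[of _ "Suc N0"] allI impI)
    fix N :: nat assume N: "Suc N0 \<le> N"
    define h where "h = (b - a) / real N"
    have Npos: "0 < real N" using N by simp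
    have h0: "0 \<le> h" using ab Npos by (simp add: h_def)
    have hd: "h < d"
    proof -
      have "(b - a) / d < real N" using N0 N by linarith
      then have "b - a < real N * d" using d by (simp add: field_simps)
      then show ?thesis using Npos by (simp add: h_def field_simps)
    qed
    have bN: "a + real N * h = b" using Npos by (simp add: h_def)
    have split: "integral {a..b} g = (\<Sum>j<N. integral {a + real j * h..a + real (Suc j) * h} g)"
      using integral_split_cells[OF h0, of a N g] cont bN by simp
    have cell: "\<bar>h * g (a + real j * h) - integral {a + real j * h..a + real (Suc j) * h} g\<bar> \<le> e * h"
      if j: "j < N" for j
    proof -
      let ?c = "a + real j * h" and ?d = "a + real (Suc j) * h"
      have cd: "?c \<le> ?d" using h0 by (simp add: algebra_simps)
      have sub: "{?c..?d} \<subseteq> {a..b}"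
      proof -
        have "real (Suc j) * h \<le> real N * h" using j h0 by (intro mult_right_mono) auto
        then show ?thesis using h0 bN by (auto simp: algebra_simps intro: order_trans)
      qed
      have cc: "continuous_on {?c..?d} (\<lambda>x. g x - g ?c)"
        by (intro continuous_intros continuous_on_subset[OF cont sub])
      have nb: "norm (integral {?c..?d} (\<lambda>x. g x - g ?c)) \<le> e * (?d - ?c)"
      proof (rule integral_bound[OF cd cc])
        fix x assume x: "x \<in> {?c..?d}"
        have "dist x ?c < d" using x hd by (auto simp: dist_real_def algebra_simps)
        then have "dist (g x) (g ?c) < e" using dd[of ?c x] sub x cd by auto
        then show "norm (g x - g ?c) \<le> e" by (simp add: dist_real_def)
      qed
      have ig: "g integrable_on {?c..?d}"
        by (rule integrable_continuous_interval[OF continuous_on_subset[OF cont sub]])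
      have "integral {?c..?d} (\<lambda>x. g x - g ?c) = integral {?c..?d} g - integral {?c..?d} (\<lambda>x. g ?c)"
        by (rule integral_diff[OF ig integrable_const_ivl])
      also have "\<dots> = integral {?c..?d} g - h * g ?c"
        using cd by (simp add: algebra_simps)
      finally have eq: "integral {?c..?d} (\<lambda>x. g x - g ?c) = integral {?c..?d} g - h * g ?c" .
      have "?d - ?c = h" by (simp add: algebra_simps)
      then have "\<bar>integral {?c..?d} g - h * g ?c\<bar> \<le> e * h" using nb eq by simp
      then show ?thesis by (simp add: abs_minus_commute)
    qed
    have "\<bar>(\<Sum>j<N. h * g (a + real j * h)) - integral {a..b} g\<bar>
        = \<bar>\<Sum>j<N. (h * g (a + real j * h) - integral {a + real j * h..a + real (Suc j) * h} g)\<bar>"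
      by (simp add: split sum_subtractf)
    also have "\<dots> \<le> (\<Sum>j<N. \<bar>h * g (a + real j * h) - integral {a + real j * h..a + real (Suc j) * h} g\<bar>)"
      by (rule sum_abs)
    also have "\<dots> \<le> (\<Sum>j<N. e * h)" by (intro sum_mono cell) auto
    also have "\<dots> = e * (b - a)" using Npos by (simp add: h_def)
    also have "\<dots> < r" using r ab by (simp add: e_def field_simps)
    finally show "norm ((\<Sum>j<N. (b - a) / real N * g (a + real j * ((b - a) / real N))) - integral {a..b} g) < r"
      by (simp add: h_def)
  qed
qed

definition rs_approx :: "real \<Rightarrow> (real \<Rightarrow> 'a \<Rightarrow> real) \<Rightarrow> real \<Rightarrow> nat \<Rightarrow> 'a \<Rightarrow> real" where
  "rs_approx \<theta> W t N \<omega> = (\<Sum>i<N. exp (- \<theta> * (t - real (Suc i) * (t / real N))) *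
      (W (real (Suc i) * (t / real N)) \<omega> - W (real i * (t / real N)) \<omega>))"

lemma abel_sum:
  fixes g w :: "nat \<Rightarrow> real"
  shows "(\<Sum>i<N. g (Suc i) * (w (Suc i) - w i)) = g N * w N - g 0 * w 0 - (\<Sum>i<N. (g (Suc i) - g i) * w i)"
  by (induction N) (simp_all add: algebra_simps)

lemma lim_exp_minus_1_seq:
  assumes "c > 0"
  shows "(\<lambda>N. (exp (c / real N) - 1) / (c / real N)) \<longlonglongrightarrow> 1"
proof -
  have r: "((\<lambda>z::real. (exp z - 1) / z) \<longlongrightarrow> 1) (at_right 0)"
    by (rule tendsto_mono[OF _ lim_exp_minus_1]) (simp add: at_within_le_at)
  have "(\<lambda>N. c / real N) \<longlonglongrightarrow> 0"
    by (rule lim_const_over_n)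
  moreover have "eventually (\<lambda>N. c / real N > 0) sequentially"
    using assms by (intro eventually_sequentiallyI[of 1]) auto
  ultimately have "filterlim (\<lambda>N. c / real N) (at_right 0) sequentially"
    by (rule tendsto_imp_filterlim_at_right)
  from filterlim_compose[OF r this] show ?thesis by simp
qed

lemma rs_approx_conv:
  fixes W :: "real \<Rightarrow> 'a \<Rightarrow> real"
  assumes th: "\<theta> > 0" and t: "t \<ge> 0" and W0: "W 0 \<omega> = 0"
    and Wc: "continuous_on {0..} (\<lambda>u. W u \<omega>)"
  shows "(\<lambda>N. rs_approx \<theta> W t N \<omega>) \<longlonglongrightarrow> ou_process \<theta> W t \<omega>"
proof (cases "t = 0")
  case True
  then show ?thesis by (simp add: rs_approx_def ou_process_def W0)
next
  case False
  then have tp: "t > 0" using t by simp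
  define G where "G u = \<theta> * exp (- \<theta> * (t - u)) * W u \<omega>" for u
  define c where "c N = (exp (\<theta> * t / real N) - 1) / (\<theta> * t / real N)" for N :: nat
  define L where "L N = (\<Sum>j<N. (t - 0) / real N * G (0 + real j * ((t - 0) / real N)))" for N :: nat
  have contG: "continuous_on {0..t} G"
    unfolding G_def by (intro continuous_intros continuous_on_subset[OF Wc]) auto
  have L: "L \<longlonglongrightarrow> integral {0..t} G"
    unfolding L_def by (rule riemann_left[OF t contG])
  have c: "c \<longlonglongrightarrow> 1"
    unfolding c_def using lim_exp_minus_1_seq[of "\<theta> * t"] th tp by simp
  have "(\<lambda>N. W t \<omega> - c N * L N) \<longlonglongrightarrow> W t \<omega> - 1 * integral {0..t} G"
    by (intro tendsto_intros c L)
  moreover have "eventually (\<lambda>N. W t \<omega> - c N * L N = rs_approx \<theta> W t N \<omega>) sequentially"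
  proof (rule eventually_sequentiallyI[of 1])
    fix N :: nat assume N: "1 \<le> N"
    define h where "h = t / real N"
    have hp: "h > 0" using N tp by (simp add: h_def)
    define g where "g i = exp (- \<theta> * (t - real i * h))" for i :: nat
    define w where "w i = W (real i * h) \<omega>" for i :: nat
    have "rs_approx \<theta> W t N \<omega> = (\<Sum>i<N. g (Suc i) * (w (Suc i) - w i))"
      by (simp add: rs_approx_def g_def w_def h_def)
    also have "\<dots> = g N * w N - g 0 * w 0 - (\<Sum>i<N. (g (Suc i) - g i) * w i)"
      by (rule abel_sum)
    also have "g N = 1" using N by (simp add: g_def h_def)
    also have "w N = W t \<omega>" using N by (simp add: w_def h_def)
    also have "w 0 = 0" using W0 by (simp add: w_def)
    also have "(\<Sum>i<N. (g (Suc i) - g i) * w i) = c N * L N"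
    proof -
      have "(g (Suc i) - g i) * w i = c N * (h * G (real i * h))" for i
      proof -
        have e: "exp (- \<theta> * (t - real (Suc i) * h)) = exp (- \<theta> * (t - real i * h)) * exp (\<theta> * h)"
          by (simp add: exp_add[symmetric] algebra_simps)
        have "c N = (exp (\<theta> * h) - 1) / (\<theta> * h)" by (simp add: c_def h_def)
        then have cN: "exp (\<theta> * h) - 1 = c N * (\<theta> * h)" using th hp by simp
        have gs: "g (Suc i) = g i * exp (\<theta> * h)"
          unfolding g_def by (rule e)
        have d: "g (Suc i) - g i = g i * (exp (\<theta> * h) - 1)"
          by (simp add: gs algebra_simps)
        have GG: "G (real i * h) = \<theta> * g i * w i" by (simp add: G_def g_def w_def)
        show ?thesis unfolding d GG cN by (simp add: algebra_simps)
      qed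
      then show ?thesis by (simp add: L_def sum_distrib_left h_def)
    qed
    finally show "W t \<omega> - c N * L N = rs_approx \<theta> W t N \<omega>" by simp
  qed
  ultimately have "(\<lambda>N. rs_approx \<theta> W t N \<omega>) \<longlonglongrightarrow> W t \<omega> - integral {0..t} G"
    by (simp add: tendsto_cong)
  moreover have "G = (\<lambda>u. \<theta> * exp (- \<theta> * (t - u)) * W u \<omega>)" by (simp add: G_def fun_eq_iff)
  ultimately show ?thesis unfolding ou_process_def by simp
qed

lemma ou_continuous:
  fixes W :: "real \<Rightarrow> 'a \<Rightarrow> real"
  assumes Wc: "continuous_on {0..} (\<lambda>u. W u \<omega>)"
  shows "continuous_on {0..T} (\<lambda>t. ou_process \<theta> W t \<omega>)"
proof -
  have ci: "continuous_on {0..T} (\<lambda>t. integral {0..t} (\<lambda>u. exp (\<theta> * u) * W u \<omega>))"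
    by (intro indefinite_integral_continuous_1 integrable_continuous_interval continuous_intros
        continuous_on_subset[OF Wc]) auto
  have eq: "ou_process \<theta> W t \<omega> = W t \<omega> - \<theta> * exp (- \<theta> * t) * integral {0..t} (\<lambda>u. exp (\<theta> * u) * W u \<omega>)" for t
  proof -
    have "(\<lambda>u. \<theta> * exp (- \<theta> * (t - u)) * W u \<omega>) = (\<lambda>u. (\<theta> * exp (- \<theta> * t)) * (exp (\<theta> * u) * W u \<omega>))"
      by (rule ext) (simp add: exp_add[symmetric] algebra_simps)
    then show ?thesis by (simp add: ou_process_def)
  qed
  show ?thesis unfolding eq
    by (intro continuous_intros ci continuous_on_subset[OF Wc]) auto
qed

lemma bm_prob: "std_brownian_motion M W \<Longrightarrow> prob_space M"
  by (simp add: std_brownian_motion_def)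

lemma bm_meas[measurable_dest]: "std_brownian_motion M W \<Longrightarrow> W t \<in> borel_measurable M"
  by (simp add: std_brownian_motion_def)

lemma bm_cont: "std_brownian_motion M W \<Longrightarrow> \<omega> \<in> space M \<Longrightarrow> continuous_on {0..} (\<lambda>t. W t \<omega>)"
  by (simp add: std_brownian_motion_def)

lemma bm_zero: "std_brownian_motion M W \<Longrightarrow> \<omega> \<in> space M \<Longrightarrow> W 0 \<omega> = 0"
  by (simp add: std_brownian_motion_def)

lemma bm_incr_indep:
  assumes "std_brownian_motion M W" "h > 0"
  shows "prob_space.indep_vars M (\<lambda>_. borel) (\<lambda>i \<omega>. W (real (Suc i) * h) \<omega> - W (real i * h) \<omega>) {..<N}"
proof -
  have "\<forall>(ts :: nat \<Rightarrow> real) k. 0 \<le> ts 0 \<longrightarrow> (\<forall>i<k. ts i < ts (Suc i)) \<longrightarrow>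
        prob_space.indep_vars M (\<lambda>_. borel) (\<lambda>i \<omega>. W (ts (Suc i)) \<omega> - W (ts i) \<omega>) {..<k}"
    using assms(1) by (simp add: std_brownian_motion_def)
  from this[rule_format, of "\<lambda>i. real i * h" N] assms(2) show ?thesis
    by (simp add: algebra_simps)
qed

lemma bm_incr_distr:
  assumes "std_brownian_motion M W" "h > 0"
  shows "distributed M lborel (\<lambda>\<omega>. W (real (Suc i) * h) \<omega> - W (real i * h) \<omega>) (normal_density 0 (sqrt h))"
proof -
  have "\<forall>s t. 0 \<le> s \<longrightarrow> s < t \<longrightarrow>
        distributed M lborel (\<lambda>\<omega>. W t \<omega> - W s \<omega>) (normal_density 0 (sqrt (t - s)))"
    using assms(1) by (simp add: std_brownian_motion_def)
  from this[rule_format, of "real i * h" "real (Suc i) * h"] assms(2) show ?thesis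
    by (simp add: algebra_simps)
qed

lemma normal_moments:
  assumes P: "prob_space M" and D: "distributed M lborel Z (normal_density 0 \<sigma>)" and s: "\<sigma> > 0"
  shows "integrable M Z" "integral\<^sup>L M Z = 0"
    "integrable M (\<lambda>\<omega>. (Z \<omega>)\<^sup>2)" "integral\<^sup>L M (\<lambda>\<omega>. (Z \<omega>)\<^sup>2) = \<sigma>\<^sup>2"
proof -
  have i1: "integrable lborel (\<lambda>x. normal_density 0 \<sigma> x * x)"
    using integrable_normal_moment[OF s, of 0 1] by simp
  show "integrable M Z"
    using distributed_integrable[OF D, of "\<lambda>x. x"] i1 by simp
  show "integral\<^sup>L M Z = 0"
    using distributed_integral[OF D, of "\<lambda>x. x"] integral_normal_moment_nz_1[OF s, of 0] by simp
  have i2: "integrable lborel (\<lambda>x. normal_density 0 \<sigma> x * x\<^sup>2)"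
    using integrable_normal_moment[OF s, of 0 2] by simp
  show "integrable M (\<lambda>\<omega>. (Z \<omega>)\<^sup>2)"
    using distributed_integrable[OF D, of "\<lambda>x. x\<^sup>2"] i2 by simp
  have "integral\<^sup>L lborel (\<lambda>x. normal_density 0 \<sigma> x * x\<^sup>2) = \<sigma>\<^sup>2"
    using integral_normal_moment_even[OF s, of 0 1] by simp
  then show "integral\<^sup>L M (\<lambda>\<omega>. (Z \<omega>)\<^sup>2) = \<sigma>\<^sup>2"
    using distributed_integral[OF D, of "\<lambda>x. x\<^sup>2"] by simp
qed

lemma lin_comb_sq:
  fixes Z :: "nat \<Rightarrow> 'a \<Rightarrow> real"
  assumes P: "prob_space M" and ind: "prob_space.indep_vars M (\<lambda>_. borel) Z {..<N}"
    and i1: "\<And>i. i < N \<Longrightarrow> integrable M (Z i)" and m1: "\<And>i. i < N \<Longrightarrow> integral\<^sup>L M (Z i) = 0"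
    and i2: "\<And>i. i < N \<Longrightarrow> integrable M (\<lambda>\<omega>. (Z i \<omega>)\<^sup>2)"
    and m2: "\<And>i. i < N \<Longrightarrow> integral\<^sup>L M (\<lambda>\<omega>. (Z i \<omega>)\<^sup>2) = v"
  shows "(\<integral>\<^sup>+\<omega>. ennreal ((\<Sum>i<N. d i * Z i \<omega>)\<^sup>2) \<partial>M) = ennreal ((\<Sum>i<N. (d i)\<^sup>2) * v)"
proof -
  interpret prob_space M by (rule P)
  have pij: "integrable M (\<lambda>\<omega>. Z i \<omega> * Z j \<omega>) \<and> integral\<^sup>L M (\<lambda>\<omega>. Z i \<omega> * Z j \<omega>) = (if i = j then v else 0)"
    if ij: "i < N" "j < N" for i j
  proof (cases "i = j")
    case True
    then show ?thesis using i2[OF ij(1)] m2[OF ij(1)] by (simp add: power2_eq_square)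
  next
    case False
    have indij: "indep_vars (\<lambda>_. borel) Z {i, j}"
      by (rule indep_vars_subset[OF ind]) (use ij in auto)
    have fin: "finite {i, j}" by simp
    have int: "\<And>k. k \<in> {i, j} \<Longrightarrow> integrable M (Z k)" using i1 ij by auto
    have "integral\<^sup>L M (\<lambda>\<omega>. \<Prod>k\<in>{i, j}. Z k \<omega>) = (\<Prod>k\<in>{i, j}. integral\<^sup>L M (Z k))"
      by (rule indep_vars_lebesgue_integral[OF fin indij int])
    moreover have "integrable M (\<lambda>\<omega>. \<Prod>k\<in>{i, j}. Z k \<omega>)"
      by (rule indep_vars_integrable[OF fin indij int])
    ultimately show ?thesis using False m1 ij by simp
  qed
  have sq: "(\<Sum>i<N. d i * Z i \<omega>)\<^sup>2 = (\<Sum>i<N. \<Sum>j<N. d i * d j * (Z i \<omega> * Z j \<omega>))" for \<omega>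
    by (simp add: power2_eq_square sum_product algebra_simps)
  have intall: "integrable M (\<lambda>\<omega>. \<Sum>i<N. \<Sum>j<N. d i * d j * (Z i \<omega> * Z j \<omega>))"
    by (intro Bochner_Integration.integrable_sum integrable_mult_right) (auto dest: pij)
  have "integral\<^sup>L M (\<lambda>\<omega>. \<Sum>i<N. \<Sum>j<N. d i * d j * (Z i \<omega> * Z j \<omega>))
      = (\<Sum>i<N. integral\<^sup>L M (\<lambda>\<omega>. \<Sum>j<N. d i * d j * (Z i \<omega> * Z j \<omega>)))"
    by (rule Bochner_Integration.integral_sum)
       (auto intro!: Bochner_Integration.integrable_sum integrable_mult_right dest: pij)
  also have "\<dots> = (\<Sum>i<N. \<Sum>j<N. integral\<^sup>L M (\<lambda>\<omega>. d i * d j * (Z i \<omega> * Z j \<omega>)))"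
    by (intro sum.cong refl Bochner_Integration.integral_sum)
       (auto intro!: integrable_mult_right dest: pij)
  also have "\<dots> = (\<Sum>i<N. \<Sum>j<N. d i * d j * integral\<^sup>L M (\<lambda>\<omega>. Z i \<omega> * Z j \<omega>))"
    by simp
  also have "\<dots> = (\<Sum>i<N. \<Sum>j<N. d i * d j * (if i = j then v else 0))"
    using pij by (intro sum.cong refl) auto
  also have "\<dots> = (\<Sum>i<N. (d i)\<^sup>2 * v)"
    by (simp add: power2_eq_square if_distrib sum.delta cong: if_cong)
  finally have e: "integral\<^sup>L M (\<lambda>\<omega>. (\<Sum>i<N. d i * Z i \<omega>)\<^sup>2) = (\<Sum>i<N. (d i)\<^sup>2) * v"
    by (simp add: sq sum_distrib_right)
  have "(\<integral>\<^sup>+\<omega>. ennreal ((\<Sum>i<N. d i * Z i \<omega>)\<^sup>2) \<partial>M) = ennreal (integral\<^sup>L M (\<lambda>\<omega>. (\<Sum>i<N. d i * Z i \<omega>)\<^sup>2))"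
    by (rule nn_integral_eq_integral) (use intall in \<open>simp_all only: sq[symmetric] zero_le_power2 AE_I2\<close>)
  then show ?thesis using e by simp
qed

lemma indep_var_nn_mult:
  fixes X Y :: "'a \<Rightarrow> ennreal"
  assumes P: "prob_space M" and ind: "prob_space.indep_var M borel X borel Y"
  shows "(\<integral>\<^sup>+\<omega>. X \<omega> * Y \<omega> \<partial>M) = (\<integral>\<^sup>+\<omega>. X \<omega> \<partial>M) * (\<integral>\<^sup>+\<omega>. Y \<omega> \<partial>M)"
proof -
  interpret prob_space M by (rule P)
  have **: "(\<lambda> _. borel) = case_bool borel borel"
    by (rule ext, metis (full_types) bool.simps(3) bool.simps(4))
  have iv: "indep_vars (\<lambda>_. borel) (case_bool X Y) UNIV"
    using ind unfolding indep_var_def ** .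
  have "(\<integral>\<^sup>+\<omega>. (\<Prod>i\<in>UNIV. case_bool X Y i \<omega>) \<partial>M) = (\<Prod>i\<in>UNIV. \<integral>\<^sup>+\<omega>. case_bool X Y i \<omega> \<partial>M)"
    by (rule indep_vars_nn_integral) (use iv in auto)
  then show ?thesis by (simp add: UNIV_bool mult.commute)
qed

lemma meas_grid_fun:
  fixes d :: "nat \<Rightarrow> real"
  assumes "\<And>i. i \<le> G \<Longrightarrow> real i * h \<in> J"
  shows "(\<lambda>x. ennreal ((\<Sum>i<G. d i * (x (real (Suc i) * h) - x (real i * h)))\<^sup>2))
          \<in> borel_measurable (PiM J (\<lambda>_. borel))"
proof -
  have c: "(\<lambda>x. x (real i * h)) \<in> borel_measurable (PiM J (\<lambda>_. borel))" if "i \<le> G" for i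
    using assms[OF that] by (rule measurable_component_singleton)
  have "(\<lambda>x. (\<Sum>i<G. d i * (x (real (Suc i) * h) - x (real i * h)))) \<in> borel_measurable (PiM J (\<lambda>_. borel))"
  proof (intro borel_measurable_sum borel_measurable_times borel_measurable_const borel_measurable_diff)
    fix i assume "i \<in> {..<G}"
    then show "(\<lambda>x. x (real (Suc i) * h)) \<in> borel_measurable (PiM J (\<lambda>_. borel))"
      "(\<lambda>x. x (real i * h)) \<in> borel_measurable (PiM J (\<lambda>_. borel))"
      using c[of "Suc i"] c[of i] by auto
  qed
  then show ?thesis by measurable
qed

lemma indep_grid:
  fixes W1 W2 :: "real \<Rightarrow> 'a \<Rightarrow> real"
  assumes P: "prob_space M" and ip: "indep_processes M W1 W2" and h: "h > 0"
  shows "(\<integral>\<^sup>+\<omega>. ennreal (((\<Sum>i<G. d i * (W1 (real (Suc i) * h) \<omega> - W1 (real i * h) \<omega>)) *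
                          (\<Sum>i<G. e i * (W2 (real (Suc i) * h) \<omega> - W2 (real i * h) \<omega>)))\<^sup>2) \<partial>M)
       = (\<integral>\<^sup>+\<omega>. ennreal ((\<Sum>i<G. d i * (W1 (real (Suc i) * h) \<omega> - W1 (real i * h) \<omega>))\<^sup>2) \<partial>M) *
         (\<integral>\<^sup>+\<omega>. ennreal ((\<Sum>i<G. e i * (W2 (real (Suc i) * h) \<omega> - W2 (real i * h) \<omega>))\<^sup>2) \<partial>M)"
proof -
  interpret prob_space M by (rule P)
  define J where "J = (\<lambda>i. real i * h) ` {..G}"
  have J: "finite J" "J \<subseteq> {0..}" using h by (auto simp: J_def)
  have inJ: "\<And>i. i \<le> G \<Longrightarrow> real i * h \<in> J" by (auto simp: J_def)
  have iv: "indep_var (PiM J (\<lambda>_. borel)) (\<lambda>\<omega>. restrict (\<lambda>t. W1 t \<omega>) J)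
                      (PiM J (\<lambda>_. borel)) (\<lambda>\<omega>. restrict (\<lambda>t. W2 t \<omega>) J)"
    using ip J unfolding indep_processes_def by blast
  define F where "F c x = ennreal ((\<Sum>i<G. c i * (x (real (Suc i) * h) - x (real i * h)))\<^sup>2)" for c :: "nat \<Rightarrow> real" and x :: "real \<Rightarrow> real"
  have Fm: "F c \<in> borel_measurable (PiM J (\<lambda>_. borel))" for c
    unfolding F_def by (rule meas_grid_fun[OF inJ])
  have iv2: "indep_var borel (F d \<circ> (\<lambda>\<omega>. restrict (\<lambda>t. W1 t \<omega>) J)) borel (F e \<circ> (\<lambda>\<omega>. restrict (\<lambda>t. W2 t \<omega>) J))"
    by (rule indep_var_compose[OF iv Fm Fm])
  have ev: "(F c \<circ> (\<lambda>\<omega>. restrict (\<lambda>t. W t \<omega>) J)) = (\<lambda>\<omega>. ennreal ((\<Sum>i<G. c i * (W (real (Suc i) * h) \<omega> - W (real i * h) \<omega>))\<^sup>2))"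
    for c and W :: "real \<Rightarrow> 'a \<Rightarrow> real"
  proof (rule ext)
    fix \<omega>
    have "(\<Sum>i<G. c i * (restrict (\<lambda>t. W t \<omega>) J (real (Suc i) * h) - restrict (\<lambda>t. W t \<omega>) J (real i * h)))
        = (\<Sum>i<G. c i * (W (real (Suc i) * h) \<omega> - W (real i * h) \<omega>))"
    proof (intro sum.cong refl)
      fix i assume "i \<in> {..<G}"
      then have "real (Suc i) * h \<in> J" "real i * h \<in> J" using inJ[of "Suc i"] inJ[of i] by auto
      then show "c i * (restrict (\<lambda>t. W t \<omega>) J (real (Suc i) * h) - restrict (\<lambda>t. W t \<omega>) J (real i * h))
        = c i * (W (real (Suc i) * h) \<omega> - W (real i * h) \<omega>)" by simp
    qed
    then show "(F c \<circ> (\<lambda>\<omega>. restrict (\<lambda>t. W t \<omega>) J)) \<omega> = ennreal ((\<Sum>i<G. c i * (W (real (Suc i) * h) \<omega> - W (real i * h) \<omega>))\<^sup>2)"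
      by (simp add: F_def)
  qed
  have "(\<integral>\<^sup>+\<omega>. (F d \<circ> (\<lambda>\<omega>. restrict (\<lambda>t. W1 t \<omega>) J)) \<omega> * (F e \<circ> (\<lambda>\<omega>. restrict (\<lambda>t. W2 t \<omega>) J)) \<omega> \<partial>M)
      = (\<integral>\<^sup>+\<omega>. (F d \<circ> (\<lambda>\<omega>. restrict (\<lambda>t. W1 t \<omega>) J)) \<omega> \<partial>M) * (\<integral>\<^sup>+\<omega>. (F e \<circ> (\<lambda>\<omega>. restrict (\<lambda>t. W2 t \<omega>) J)) \<omega> \<partial>M)"
    by (rule indep_var_nn_mult[OF P iv2])
  then show ?thesis unfolding ev by (simp add: power_mult_distrib ennreal_mult)
qed

lemma bm_grid_sq:
  assumes B: "std_brownian_motion M W" and h: "h > 0"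
  shows "(\<integral>\<^sup>+\<omega>. ennreal ((\<Sum>i<G. d i * (W (real (Suc i) * h) \<omega> - W (real i * h) \<omega>))\<^sup>2) \<partial>M)
       = ennreal ((\<Sum>i<G. (d i)\<^sup>2) * h)"
proof -
  have P: "prob_space M" by (rule bm_prob[OF B])
  have sh: "sqrt h > 0" using h by simp
  note nm = normal_moments[OF P bm_incr_distr[OF B h] sh]
  show ?thesis
    by (rule lin_comb_sq[OF P bm_incr_indep[OF B h]]) (use nm h in auto)
qed

lemma fatou_indep:
  fixes W1 W2 :: "real \<Rightarrow> 'a \<Rightarrow> real" and F1 F2 :: "'a \<Rightarrow> real"
    and h :: "nat \<Rightarrow> real" and G :: "nat \<Rightarrow> nat" and d e :: "nat \<Rightarrow> nat \<Rightarrow> real"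
    and B1 B2 :: "nat \<Rightarrow> real"
  assumes B1: "std_brownian_motion M W1" and B2: "std_brownian_motion M W2"
    and ip: "indep_processes M W1 W2" and h: "\<And>L. h L > 0"
    and c1: "\<And>\<omega>. \<omega> \<in> space M \<Longrightarrow> (\<lambda>L. \<Sum>i<G L. d L i * (W1 (real (Suc i) * h L) \<omega> - W1 (real i * h L) \<omega>)) \<longlonglongrightarrow> F1 \<omega>"
    and c2: "\<And>\<omega>. \<omega> \<in> space M \<Longrightarrow> (\<lambda>L. \<Sum>i<G L. e L i * (W2 (real (Suc i) * h L) \<omega> - W2 (real i * h L) \<omega>)) \<longlonglongrightarrow> F2 \<omega>"
    and b1: "\<And>L. (\<Sum>i<G L. (d L i)\<^sup>2) * h L \<le> B1 L" and l1: "B1 \<longlonglongrightarrow> b1"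
    and b2: "\<And>L. (\<Sum>i<G L. (e L i)\<^sup>2) * h L \<le> B2 L" and l2: "B2 \<longlonglongrightarrow> b2"
  shows "(\<integral>\<^sup>+\<omega>. ennreal ((F1 \<omega> * F2 \<omega>)\<^sup>2) \<partial>M) \<le> ennreal (b1 * b2)"
proof -
  have P: "prob_space M" by (rule bm_prob[OF B1])
  define U where "U L \<omega> = (\<Sum>i<G L. d L i * (W1 (real (Suc i) * h L) \<omega> - W1 (real i * h L) \<omega>))" for L \<omega>
  define V where "V L \<omega> = (\<Sum>i<G L. e L i * (W2 (real (Suc i) * h L) \<omega> - W2 (real i * h L) \<omega>))" for L \<omega>
  have Um: "U L \<in> borel_measurable M" for L
    unfolding U_def using B1 by measurable
  have Vm: "V L \<in> borel_measurable M" for L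
    unfolding V_def using B2 by measurable
  have B1n: "0 \<le> B1 L" for L
    by (rule order_trans[OF _ b1]) (intro mult_nonneg_nonneg sum_nonneg zero_le_power2 less_imp_le[OF h])
  have B2n: "0 \<le> B2 L" for L
    by (rule order_trans[OF _ b2]) (intro mult_nonneg_nonneg sum_nonneg zero_le_power2 less_imp_le[OF h])
  have "(\<integral>\<^sup>+\<omega>. ennreal ((F1 \<omega> * F2 \<omega>)\<^sup>2) \<partial>M) = (\<integral>\<^sup>+\<omega>. liminf (\<lambda>L. ennreal ((U L \<omega> * V L \<omega>)\<^sup>2)) \<partial>M)"
  proof (rule nn_integral_cong)
    fix \<omega> assume \<omega>: "\<omega> \<in> space M"
    have "(\<lambda>L. ennreal ((U L \<omega> * V L \<omega>)\<^sup>2)) \<longlonglongrightarrow> ennreal ((F1 \<omega> * F2 \<omega>)\<^sup>2)"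
      using c1[OF \<omega>] c2[OF \<omega>] unfolding U_def V_def
      by (intro tendsto_ennrealI tendsto_intros)
    then show "ennreal ((F1 \<omega> * F2 \<omega>)\<^sup>2) = liminf (\<lambda>L. ennreal ((U L \<omega> * V L \<omega>)\<^sup>2))"
      by (metis lim_imp_Liminf trivial_limit_sequentially)
  qed
  also have "\<dots> \<le> liminf (\<lambda>L. \<integral>\<^sup>+\<omega>. ennreal ((U L \<omega> * V L \<omega>)\<^sup>2) \<partial>M)"
    by (rule nn_integral_liminf) (use Um Vm in measurable)
  also have "\<dots> \<le> liminf (\<lambda>L. ennreal (B1 L * B2 L))"
  proof (rule Liminf_mono, rule always_eventually, rule allI)
    fix L
    have "(\<integral>\<^sup>+\<omega>. ennreal ((U L \<omega> * V L \<omega>)\<^sup>2) \<partial>M)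
        = (\<integral>\<^sup>+\<omega>. ennreal ((U L \<omega>)\<^sup>2) \<partial>M) * (\<integral>\<^sup>+\<omega>. ennreal ((V L \<omega>)\<^sup>2) \<partial>M)"
      unfolding U_def V_def by (rule indep_grid[OF P ip h])
    also have "\<dots> = ennreal ((\<Sum>i<G L. (d L i)\<^sup>2) * h L) * ennreal ((\<Sum>i<G L. (e L i)\<^sup>2) * h L)"
      unfolding U_def V_def bm_grid_sq[OF B1 h] bm_grid_sq[OF B2 h] ..
    also have "\<dots> \<le> ennreal (B1 L) * ennreal (B2 L)"
      by (intro mult_mono ennreal_leI b1 b2) auto
    also have "\<dots> = ennreal (B1 L * B2 L)" using B1n B2n by (simp add: ennreal_mult)
    finally show "(\<integral>\<^sup>+\<omega>. ennreal ((U L \<omega> * V L \<omega>)\<^sup>2) \<partial>M) \<le> ennreal (B1 L * B2 L)" .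
  qed
  also have "\<dots> = ennreal (b1 * b2)"
    by (intro lim_imp_Liminf tendsto_ennrealI tendsto_mult l1 l2) simp
  finally show ?thesis .
qed

lemma geo_bound:
  assumes th: "\<theta> > 0" and h: "h > 0"
  shows "(\<Sum>i<n. exp (- 2 * \<theta> * (real n * h - real (Suc i) * h))) * h \<le> 1 / (2 * \<theta>) + h"
proof -
  define r where "r = exp (- 2 * \<theta> * h)"
  have r0: "0 < r" and r1: "r < 1" using th h by (auto simp: r_def)
  have "(\<Sum>i<n. exp (- 2 * \<theta> * (real n * h - real (Suc i) * h))) = (\<Sum>i<n. r ^ (n - Suc i))"
  proof (intro sum.cong refl)
    fix i assume "i \<in> {..<n}"
    then have "real n * h - real (Suc i) * h = real (n - Suc i) * h"
      by (simp add: of_nat_diff algebra_simps)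
    then show "exp (- 2 * \<theta> * (real n * h - real (Suc i) * h)) = r ^ (n - Suc i)"
      by (simp add: r_def exp_of_nat_mult[symmetric] algebra_simps)
  qed
  also have "\<dots> = (\<Sum>i<n. r ^ i)" by (rule sum.nat_diff_reindex)
  also have "\<dots> = (1 - r ^ n) / (1 - r)" using r1 by (simp add: sum_gp_strict)
  also have "\<dots> \<le> 1 / (1 - r)" using r0 r1 by (simp add: divide_right_mono)
  finally have s0: "(\<Sum>i<n. exp (- 2 * \<theta> * (real n * h - real (Suc i) * h))) \<le> 1 / (1 - r)" .
  have s: "(\<Sum>i<n. exp (- 2 * \<theta> * (real n * h - real (Suc i) * h))) * h \<le> h / (1 - r)"
    using mult_right_mono[OF s0, of h] h by simp
  have "r * (1 + 2 * \<theta> * h) \<le> r * exp (2 * \<theta> * h)"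
    using r0 exp_ge_add_one_self[of "2 * \<theta> * h"] by simp
  also have "\<dots> = 1" by (simp add: r_def exp_minus_inverse[symmetric] exp_add[symmetric] flip: exp_add)
  finally have "r * (1 + 2 * \<theta> * h) \<le> 1" .
  then have "h \<le> (1 - r) * (1 / (2 * \<theta>) + h)" using th by (simp add: field_simps)
  then have "h / (1 - r) \<le> 1 / (2 * \<theta>) + h" using r1 by (simp add: divide_simps mult.commute)
  with s show ?thesis by linarith
qed

definition cf :: "real \<Rightarrow> real \<Rightarrow> nat \<Rightarrow> real \<Rightarrow> nat \<Rightarrow> real" where
  "cf \<theta> t n h i = (if i < n then exp (- \<theta> * (t - real (Suc i) * h)) else 0)"

lemma cf_sum:
  assumes "n \<le> G"
  shows "(\<Sum>i<G. cf \<theta> t n h i * z i) = (\<Sum>i<n. exp (- \<theta> * (t - real (Suc i) * h)) * z i)"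
proof -
  have "(\<Sum>i<G. cf \<theta> t n h i * z i) = (\<Sum>i\<in>{..<G}. if i \<in> {..<n} then exp (- \<theta> * (t - real (Suc i) * h)) * z i else 0)"
    by (intro sum.cong refl) (simp add: cf_def)
  also have "\<dots> = (\<Sum>i\<in>{..<G} \<inter> {..<n}. exp (- \<theta> * (t - real (Suc i) * h)) * z i)"
    by (rule sym, rule sum.inter_restrict) simp
  also have "{..<G} \<inter> {..<n} = {..<n}" using assms by auto
  finally show ?thesis .
qed

lemma cf_sq_bound:
  assumes th: "\<theta> > 0" and h: "h > 0" and n: "n \<le> G" and t: "t = real n * h"
  shows "(\<Sum>i<G. (cf \<theta> t n h i)\<^sup>2) * h \<le> 1 / (2 * \<theta>) + h"
proof -
  have "(\<Sum>i<G. (cf \<theta> t n h i)\<^sup>2) = (\<Sum>i<G. cf \<theta> t n h i * cf \<theta> t n h i)"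
    by (simp add: power2_eq_square)
  also have "\<dots> = (\<Sum>i<n. exp (- \<theta> * (t - real (Suc i) * h)) * cf \<theta> t n h i)"
    by (rule cf_sum[OF n])
  also have "\<dots> = (\<Sum>i<n. exp (- 2 * \<theta> * (real n * h - real (Suc i) * h)))"
  proof (intro sum.cong refl)
    fix i assume "i \<in> {..<n}"
    then show "exp (- \<theta> * (t - real (Suc i) * h)) * cf \<theta> t n h i = exp (- 2 * \<theta> * (real n * h - real (Suc i) * h))"
      by (simp add: cf_def t exp_add[symmetric] algebra_simps)
  qed
  finally show ?thesis using geo_bound[OF th h, of n] by simp
qed

lemma cf_diff_bound:
  assumes th: "\<theta> > 0" and h: "h > 0" and KN: "K \<le> N" "N \<le> G"
    and a: "a = real K * h" and b: "b = real N * h"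
  shows "(\<Sum>i<G. (cf \<theta> a K h i - cf \<theta> b N h i)\<^sup>2) * h
         \<le> (1 - exp (- \<theta> * (b - a)))\<^sup>2 * (1 / (2 * \<theta>) + h) + (b - a)"
proof -
  define q where "q = exp (- \<theta> * (b - a))"
  define D where "D i = (cf \<theta> a K h i - cf \<theta> b N h i)\<^sup>2" for i
  have D0: "D i = 0" if "i \<ge> N" for i using that KN by (simp add: D_def cf_def)
  have "(\<Sum>i<G. D i) = (\<Sum>i<N. D i)"
  proof -
    have "(\<Sum>i<G. D i) = (\<Sum>i\<in>{..<N} \<union> {N..<G}. D i)"
      using KN by (intro sum.cong refl) auto
    also have "\<dots> = (\<Sum>i<N. D i) + (\<Sum>i\<in>{N..<G}. D i)"
      by (rule sum.union_disjoint) auto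
    also have "(\<Sum>i\<in>{N..<G}. D i) = 0" by (intro sum.neutral) (auto intro: D0)
    finally show ?thesis by simp
  qed
  also have "(\<Sum>i<N. D i) = (\<Sum>i<K. D i) + (\<Sum>i\<in>{K..<N}. D i)"
  proof -
    have "(\<Sum>i<N. D i) = (\<Sum>i\<in>{..<K} \<union> {K..<N}. D i)" using KN by (intro sum.cong) auto
    also have "\<dots> = (\<Sum>i<K. D i) + (\<Sum>i\<in>{K..<N}. D i)" by (rule sum.union_disjoint) auto
    finally show ?thesis .
  qed
  finally have split: "(\<Sum>i<G. D i) = (\<Sum>i<K. D i) + (\<Sum>i\<in>{K..<N}. D i)" .
  have DK: "D i = (1 - q)\<^sup>2 * exp (- 2 * \<theta> * (real K * h - real (Suc i) * h))" if "i < K" for i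
  proof -
    have "exp (- \<theta> * (b - real (Suc i) * h)) = q * exp (- \<theta> * (a - real (Suc i) * h))"
      by (simp add: q_def exp_add[symmetric] algebra_simps)
    then have "cf \<theta> a K h i - cf \<theta> b N h i = (1 - q) * exp (- \<theta> * (a - real (Suc i) * h))"
      using that KN by (simp add: cf_def algebra_simps)
    then have "D i = (1 - q)\<^sup>2 * (exp (- \<theta> * (a - real (Suc i) * h)))\<^sup>2"
      by (simp add: D_def power_mult_distrib)
    also have "(exp (- \<theta> * (a - real (Suc i) * h)))\<^sup>2 = exp (- 2 * \<theta> * (real K * h - real (Suc i) * h))"
      unfolding power2_eq_square exp_add[symmetric] a by (simp add: algebra_simps)
    finally show ?thesis .
  qed
  have DN: "D i \<le> 1" if "i \<in> {K..<N}" for i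
  proof -
    have iN: "real (Suc i) * h \<le> b" using that h b by (auto intro!: mult_right_mono)
    have "cf \<theta> a K h i - cf \<theta> b N h i = - exp (- \<theta> * (b - real (Suc i) * h))"
      using that by (simp add: cf_def)
    moreover have e1: "exp (- \<theta> * (b - real (Suc i) * h)) \<le> 1"
      using th iN by simp
    ultimately have "D i = exp (- \<theta> * (b - real (Suc i) * h)) * exp (- \<theta> * (b - real (Suc i) * h))"
      by (simp add: D_def power2_eq_square)
    also have "\<dots> \<le> 1" using e1 by (intro mult_le_one) auto
    finally show ?thesis .
  qed
  have s1: "(\<Sum>i<K. D i) * h \<le> (1 - q)\<^sup>2 * (1 / (2 * \<theta>) + h)"
  proof -
    have "(\<Sum>i<K. D i) = (1 - q)\<^sup>2 * (\<Sum>i<K. exp (- 2 * \<theta> * (real K * h - real (Suc i) * h)))"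
      by (simp add: DK sum_distrib_left)
    then have "(\<Sum>i<K. D i) * h = (1 - q)\<^sup>2 * ((\<Sum>i<K. exp (- 2 * \<theta> * (real K * h - real (Suc i) * h))) * h)"
      by simp
    also have "\<dots> \<le> (1 - q)\<^sup>2 * (1 / (2 * \<theta>) + h)"
      by (intro mult_left_mono geo_bound th h) simp
    finally show ?thesis .
  qed
  have s2: "(\<Sum>i\<in>{K..<N}. D i) * h \<le> b - a"
  proof -
    have "(\<Sum>i\<in>{K..<N}. D i) \<le> (\<Sum>i\<in>{K..<N}. 1)" by (intro sum_mono DN)
    also have "\<dots> = real N - real K" using KN by simp
    finally have "(\<Sum>i\<in>{K..<N}. D i) * h \<le> (real N - real K) * h"
      using h by (intro mult_right_mono) auto
    then show ?thesis by (simp add: a b algebra_simps)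
  qed
  show ?thesis
    using split s1 s2 by (simp add: D_def q_def distrib_right)
qed

lemma ou_meas:
  assumes B: "std_brownian_motion M W" and th: "\<theta> > 0" and t: "t \<ge> 0"
  shows "(\<lambda>\<omega>. ou_process \<theta> W t \<omega>) \<in> borel_measurable M"
proof (rule borel_measurable_LIMSEQ_metric)
  show "(\<lambda>\<omega>. rs_approx \<theta> W t N \<omega>) \<in> borel_measurable M" for N
    unfolding rs_approx_def using B by measurable
  show "(\<lambda>N. rs_approx \<theta> W t N \<omega>) \<longlonglongrightarrow> ou_process \<theta> W t \<omega>" if "\<omega> \<in> space M" for \<omega>
    by (rule rs_approx_conv[where W=W and \<omega>=\<omega>, OF th t bm_zero[OF B that] bm_cont[OF B that]])
qed

lemma ou_grid_conv:
  assumes B: "std_brownian_motion M W" and \<omega>: "\<omega> \<in> space M" and th: "\<theta> > 0" and s: "s > 0"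
    and PG: "P \<le> Gm"
  shows "(\<lambda>L. \<Sum>i<Gm * Suc L. cf \<theta> (real P * s) (P * Suc L) (s / real (Suc L)) i *
            (W (real (Suc i) * (s / real (Suc L))) \<omega> - W (real i * (s / real (Suc L))) \<omega>))
         \<longlonglongrightarrow> ou_process \<theta> W (real P * s) \<omega>"
proof -
  have eq: "(\<Sum>i<Gm * Suc L. cf \<theta> (real P * s) (P * Suc L) (s / real (Suc L)) i *
            (W (real (Suc i) * (s / real (Suc L))) \<omega> - W (real i * (s / real (Suc L))) \<omega>))
          = (\<Sum>i<P * Suc L. exp (- \<theta> * (real P * s - real (Suc i) * (s / real (Suc L)))) *
            (W (real (Suc i) * (s / real (Suc L))) \<omega> - W (real i * (s / real (Suc L))) \<omega>))" for L
    by (rule cf_sum) (rule mult_le_mono1[OF PG])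
  show ?thesis
  proof (cases "P = 0")
    case True
    have "ou_process \<theta> W 0 \<omega> = 0" using bm_zero[OF B \<omega>] by (simp add: ou_process_def)
    then show ?thesis unfolding eq using True by simp
  next
    case False
    have st: "s / real (Suc L) = real P * s / real (P * Suc L)" for L
    proof -
      have "real P \<noteq> 0" using False by simp
      then have "real P * s / (real P * real (Suc L)) = s / real (Suc L)"
        by (rule mult_divide_mult_cancel_left)
      then show ?thesis by (simp only: of_nat_mult)
    qed
    have "(\<lambda>N. rs_approx \<theta> W (real P * s) N \<omega>) \<longlonglongrightarrow> ou_process \<theta> W (real P * s) \<omega>"
      by (rule rs_approx_conv[where W=W and \<omega>=\<omega>, OF th _ bm_zero[OF B \<omega>] bm_cont[OF B \<omega>]]) (use s in simp)
    moreover have "strict_mono (\<lambda>L. P * Suc L)"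
      using False by (auto simp: strict_mono_Suc_iff)
    ultimately have "((\<lambda>N. rs_approx \<theta> W (real P * s) N \<omega>) \<circ> (\<lambda>L. P * Suc L)) \<longlonglongrightarrow> ou_process \<theta> W (real P * s) \<omega>"
      by (rule LIMSEQ_subseq_LIMSEQ)
    then show ?thesis unfolding eq unfolding st by (simp add: rs_approx_def o_def)
  qed
qed

lemma hL_lim: "(\<lambda>L. s / real (Suc L)) \<longlonglongrightarrow> 0"
  using LIMSEQ_Suc[OF lim_const_over_n[of s]] by simp

lemma term_bound:
  fixes W1 W2 :: "real \<Rightarrow> 'a \<Rightarrow> real"
  assumes B1: "std_brownian_motion M W1" and B2: "std_brownian_motion M W2"
    and ip: "indep_processes M W1 W2" and th: "\<theta> > 0" and s: "s > 0" and KN: "K \<le> N"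
  defines "a \<equiv> real K * s" and "b \<equiv> real N * s"
  shows "(\<integral>\<^sup>+\<omega>. ennreal ((ou_process \<theta> W1 a \<omega> * (ou_process \<theta> W2 a \<omega> - ou_process \<theta> W2 b \<omega>))\<^sup>2) \<partial>M)
           \<le> ennreal (1 / (2 * \<theta>) * ((1 - exp (- \<theta> * (b - a)))\<^sup>2 * (1 / (2 * \<theta>)) + (b - a)))"
    and "(\<integral>\<^sup>+\<omega>. ennreal (((ou_process \<theta> W1 a \<omega> - ou_process \<theta> W1 b \<omega>) * ou_process \<theta> W2 b \<omega>)\<^sup>2) \<partial>M)
           \<le> ennreal (((1 - exp (- \<theta> * (b - a)))\<^sup>2 * (1 / (2 * \<theta>)) + (b - a)) * (1 / (2 * \<theta>)))"
proof -
  define hL where "hL L = s / real (Suc L)" for L :: nat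
  define G where "G L = N * Suc L" for L :: nat
  define dA where "dA L = cf \<theta> a (K * Suc L) (hL L)" for L
  define dB where "dB L = cf \<theta> b (N * Suc L) (hL L)" for L
  define q where "q = exp (- \<theta> * (b - a))"
  have hpos: "hL L > 0" for L using s by (simp add: hL_def)
  have hlim: "hL \<longlonglongrightarrow> 0" unfolding hL_def by (rule hL_lim)
  have aL: "a = real (K * Suc L) * hL L" and bL: "b = real (N * Suc L) * hL L" for L
    by (simp_all add: a_def b_def hL_def field_simps)
  have KNL: "K * Suc L \<le> N * Suc L" for L using KN by (rule mult_le_mono1)
  have KG: "K * Suc L \<le> G L" and NG: "N * Suc L \<le> G L" for L
    using KNL by (simp_all add: G_def)
  have cA: "(\<lambda>L. \<Sum>i<G L. dA L i * (W (real (Suc i) * hL L) \<omega> - W (real i * hL L) \<omega>))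
      \<longlonglongrightarrow> ou_process \<theta> W a \<omega>"
    if "std_brownian_motion M W" "\<omega> \<in> space M" for W :: "real \<Rightarrow> 'a \<Rightarrow> real" and \<omega>
    unfolding G_def dA_def hL_def a_def by (rule ou_grid_conv[OF that th s KN])
  have cB: "(\<lambda>L. \<Sum>i<G L. dB L i * (W (real (Suc i) * hL L) \<omega> - W (real i * hL L) \<omega>))
      \<longlonglongrightarrow> ou_process \<theta> W b \<omega>"
    if "std_brownian_motion M W" "\<omega> \<in> space M" for W :: "real \<Rightarrow> 'a \<Rightarrow> real" and \<omega>
    unfolding G_def dB_def hL_def b_def by (rule ou_grid_conv[OF that th s order_refl])
  have cD: "(\<lambda>L. \<Sum>i<G L. (dA L i - dB L i) * (W (real (Suc i) * hL L) \<omega> - W (real i * hL L) \<omega>))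
      \<longlonglongrightarrow> ou_process \<theta> W a \<omega> - ou_process \<theta> W b \<omega>"
    if "std_brownian_motion M W" "\<omega> \<in> space M" for W :: "real \<Rightarrow> 'a \<Rightarrow> real" and \<omega>
  proof -
    have "(\<lambda>L. (\<Sum>i<G L. dA L i * (W (real (Suc i) * hL L) \<omega> - W (real i * hL L) \<omega>)) -
               (\<Sum>i<G L. dB L i * (W (real (Suc i) * hL L) \<omega> - W (real i * hL L) \<omega>)))
      \<longlonglongrightarrow> ou_process \<theta> W a \<omega> - ou_process \<theta> W b \<omega>"
      by (intro tendsto_diff cA cB that)
    then show ?thesis by (simp add: left_diff_distrib sum_subtractf)
  qed
  have bA: "(\<Sum>i<G L. (dA L i)\<^sup>2) * hL L \<le> 1 / (2 * \<theta>) + hL L" for L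
    unfolding dA_def by (rule cf_sq_bound[OF th hpos KG aL])
  have bB: "(\<Sum>i<G L. (dB L i)\<^sup>2) * hL L \<le> 1 / (2 * \<theta>) + hL L" for L
    unfolding dB_def by (rule cf_sq_bound[OF th hpos NG bL])
  have bD: "(\<Sum>i<G L. (dA L i - dB L i)\<^sup>2) * hL L \<le> (1 - q)\<^sup>2 * (1 / (2 * \<theta>) + hL L) + (b - a)" for L
    unfolding dA_def dB_def q_def by (rule cf_diff_bound[OF th hpos KNL NG aL bL])
  have l1: "(\<lambda>L. 1 / (2 * \<theta>) + hL L) \<longlonglongrightarrow> 1 / (2 * \<theta>)"
    using tendsto_add[OF tendsto_const hlim, of "1 / (2 * \<theta>)"] by simp
  have l2: "(\<lambda>L. (1 - q)\<^sup>2 * (1 / (2 * \<theta>) + hL L) + (b - a)) \<longlonglongrightarrow> (1 - q)\<^sup>2 * (1 / (2 * \<theta>)) + (b - a)"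
    by (intro tendsto_intros l1)
  show "(\<integral>\<^sup>+\<omega>. ennreal ((ou_process \<theta> W1 a \<omega> * (ou_process \<theta> W2 a \<omega> - ou_process \<theta> W2 b \<omega>))\<^sup>2) \<partial>M)
           \<le> ennreal (1 / (2 * \<theta>) * ((1 - exp (- \<theta> * (b - a)))\<^sup>2 * (1 / (2 * \<theta>)) + (b - a)))"
    unfolding q_def[symmetric]
    by (rule fatou_indep[OF B1 B2 ip hpos, where d=dA and e="\<lambda>L i. dA L i - dB L i" and G=G,
          OF cA[OF B1] cD[OF B2] bA l1 bD l2])
  show "(\<integral>\<^sup>+\<omega>. ennreal (((ou_process \<theta> W1 a \<omega> - ou_process \<theta> W1 b \<omega>) * ou_process \<theta> W2 b \<omega>)\<^sup>2) \<partial>M)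
           \<le> ennreal (((1 - exp (- \<theta> * (b - a)))\<^sup>2 * (1 / (2 * \<theta>)) + (b - a)) * (1 / (2 * \<theta>)))"
    unfolding q_def[symmetric]
    by (rule fatou_indep[OF B1 B2 ip hpos, where e=dB and d="\<lambda>L i. dA L i - dB L i" and G=G,
          OF cD[OF B1] cB[OF B2] bD l2 bB l1])
qed

lemma incr_bound:
  fixes W1 W2 :: "real \<Rightarrow> 'a \<Rightarrow> real"
  assumes B1: "std_brownian_motion M W1" and B2: "std_brownian_motion M W2"
    and ip: "indep_processes M W1 W2" and th: "\<theta> > 0" and s: "s > 0" and KN: "K \<le> N"
  shows "(\<integral>\<^sup>+\<omega>. ennreal ((ou_process \<theta> W1 (real K * s) \<omega> * ou_process \<theta> W2 (real K * s) \<omega>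
              - ou_process \<theta> W1 (real N * s) \<omega> * ou_process \<theta> W2 (real N * s) \<omega>)\<^sup>2) \<partial>M)
         \<le> ennreal (3 * ((real N - real K) * s) / \<theta>)"
proof -
  define a where "a = real K * s"
  define b where "b = real N * s"
  have a0: "a \<ge> 0" and b0: "b \<ge> 0" using s by (simp_all add: a_def b_def)
  have ab: "b - a = (real N - real K) * s" by (simp add: a_def b_def algebra_simps)
  have Dn: "b - a \<ge> 0" using KN s by (simp add: ab)
  define X1 where "X1 t \<omega> = ou_process \<theta> W1 t \<omega>" for t \<omega>
  define X2 where "X2 t \<omega> = ou_process \<theta> W2 t \<omega>" for t \<omega>
  have m1: "X1 t \<in> borel_measurable M" if "t \<ge> 0" for t
    unfolding X1_def using ou_meas[OF B1 th that] by simp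
  have m2: "X2 t \<in> borel_measurable M" if "t \<ge> 0" for t
    unfolding X2_def using ou_meas[OF B2 th that] by simp
  define u where "u \<omega> = X1 a \<omega> * (X2 a \<omega> - X2 b \<omega>)" for \<omega>
  define v where "v \<omega> = (X1 a \<omega> - X1 b \<omega>) * X2 b \<omega>" for \<omega>
  have um: "u \<in> borel_measurable M" unfolding u_def using m1[OF a0] m2[OF a0] m2[OF b0] by measurable
  have vm: "v \<in> borel_measurable M" unfolding v_def using m1[OF a0] m1[OF b0] m2[OF b0] by measurable
  define q where "q = exp (- \<theta> * (b - a))"
  define P where "P = 1 / (2 * \<theta>) * ((1 - q)\<^sup>2 * (1 / (2 * \<theta>)) + (b - a))"
  have tb: "(\<integral>\<^sup>+\<omega>. ennreal ((u \<omega>)\<^sup>2) \<partial>M) \<le> ennreal P" "(\<integral>\<^sup>+\<omega>. ennreal ((v \<omega>)\<^sup>2) \<partial>M) \<le> ennreal P"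
    using term_bound[OF B1 B2 ip th s KN]
    unfolding u_def v_def X1_def X2_def P_def q_def a_def b_def by (simp_all add: mult.commute)
  have "(\<integral>\<^sup>+\<omega>. ennreal ((X1 a \<omega> * X2 a \<omega> - X1 b \<omega> * X2 b \<omega>)\<^sup>2) \<partial>M)
      \<le> (\<integral>\<^sup>+\<omega>. 2 * ennreal ((u \<omega>)\<^sup>2) + 2 * ennreal ((v \<omega>)\<^sup>2) \<partial>M)"
  proof (rule nn_integral_mono)
    fix \<omega>
    have e: "X1 a \<omega> * X2 a \<omega> - X1 b \<omega> * X2 b \<omega> = u \<omega> + v \<omega>" by (simp add: u_def v_def algebra_simps)
    have "(u \<omega> + v \<omega>)\<^sup>2 \<le> 2 * (u \<omega>)\<^sup>2 + 2 * (v \<omega>)\<^sup>2"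
      using zero_le_power2[of "u \<omega> - v \<omega>"] by (simp add: power2_eq_square algebra_simps)
    then have "ennreal ((u \<omega> + v \<omega>)\<^sup>2) \<le> ennreal (2 * (u \<omega>)\<^sup>2 + 2 * (v \<omega>)\<^sup>2)"
      by (rule ennreal_leI)
    also have "\<dots> = 2 * ennreal ((u \<omega>)\<^sup>2) + 2 * ennreal ((v \<omega>)\<^sup>2)"
      by (simp add: ennreal_plus ennreal_mult)
    finally show "ennreal ((X1 a \<omega> * X2 a \<omega> - X1 b \<omega> * X2 b \<omega>)\<^sup>2) \<le> 2 * ennreal ((u \<omega>)\<^sup>2) + 2 * ennreal ((v \<omega>)\<^sup>2)"
      unfolding e .
  qed
  also have "\<dots> = 2 * (\<integral>\<^sup>+\<omega>. ennreal ((u \<omega>)\<^sup>2) \<partial>M) + 2 * (\<integral>\<^sup>+\<omega>. ennreal ((v \<omega>)\<^sup>2) \<partial>M)"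
    using um vm by (simp add: nn_integral_add nn_integral_cmult)
  also have "\<dots> \<le> 2 * ennreal P + 2 * ennreal P"
    by (intro add_mono mult_left_mono tb) auto
  also have "\<dots> = ennreal (4 * P)"
  proof -
    have P0: "0 \<le> P" using th Dn by (simp add: P_def)
    have "ennreal (2 * P) = ennreal 2 * ennreal P" using P0 by (simp add: ennreal_mult)
    then have e2: "ennreal (2 * P) = 2 * ennreal P" by simp
    have "ennreal (2 * P + 2 * P) = ennreal (2 * P) + ennreal (2 * P)" using P0 by (intro ennreal_plus) auto
    then show ?thesis using e2 by simp
  qed
  also have "\<dots> \<le> ennreal (3 * (b - a) / \<theta>)"
  proof (rule ennreal_leI)
    have q1: "1 - q \<le> \<theta> * (b - a)" using exp_ge_add_one_self[of "- \<theta> * (b - a)"] by (simp add: q_def)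
    have q0: "0 \<le> 1 - q" using th Dn by (simp add: q_def mult_nonneg_nonneg)
    have q2: "1 - q \<le> 1" by (simp add: q_def)
    have "(1 - q)\<^sup>2 \<le> 1 - q" using q0 q2 by (simp add: power2_eq_square mult_le_one mult_left_le)
    then have "(1 - q)\<^sup>2 \<le> \<theta> * (b - a)" using q1 by linarith
    then have h1: "(1 - q)\<^sup>2 / \<theta> \<le> b - a" using th by (simp add: divide_le_eq mult.commute)
    have "4 * P = ((1 - q)\<^sup>2 / \<theta> + 2 * (b - a)) / \<theta>" using th by (simp add: P_def field_simps)
    also have "\<dots> \<le> (3 * (b - a)) / \<theta>" using h1 th by (intro divide_right_mono) auto
    finally show "4 * P \<le> 3 * (b - a) / \<theta>" .
  qed
  finally show ?thesis unfolding X1_def X2_def ab[symmetric] unfolding a_def b_def .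
qed

lemma delta_limit:
  fixes Y :: "real \<Rightarrow> real"
  assumes cont: "continuous_on {0..real n * \<Delta>} Y" and D: "\<Delta> > 0" and n: "n \<ge> 1"
  shows "(\<lambda>m. 1 / sqrt (real n * \<Delta>) * (\<Sum>k<n. \<Sum>j<Suc m. \<Delta> / real (Suc m) *
            (Y (real (k * Suc m) * (\<Delta> / real (Suc m))) - Y (real (k * Suc m + j) * (\<Delta> / real (Suc m))))))
         \<longlonglongrightarrow> sqrt (real n * \<Delta>) / real n * (\<Sum>k<n. Y (real k * \<Delta>))
             - 1 / sqrt (real n * \<Delta>) * integral {0..real n * \<Delta>} Y"
proof -
  define T where "T = real n * \<Delta>"
  have Tp: "T > 0" using D n by (simp add: T_def)
  define R where "R k N = (\<Sum>j<N. (real (Suc k) * \<Delta> - real k * \<Delta>) / real N *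
      Y (real k * \<Delta> + real j * ((real (Suc k) * \<Delta> - real k * \<Delta>) / real N)))" for k N
  have Rlim: "(\<lambda>m. R k (Suc m)) \<longlonglongrightarrow> integral {real k * \<Delta>..real (Suc k) * \<Delta>} Y" if k: "k < n" for k
  proof -
    have sub: "{real k * \<Delta>..real (Suc k) * \<Delta>} \<subseteq> {0..real n * \<Delta>}"
    proof -
      have "real (Suc k) * \<Delta> \<le> real n * \<Delta>" using k D by (intro mult_right_mono) auto
      then show ?thesis using D by auto
    qed
    have "R k \<longlonglongrightarrow> integral {real k * \<Delta>..real (Suc k) * \<Delta>} Y"
      unfolding R_def by (rule riemann_left) (use D continuous_on_subset[OF cont sub] in auto)
    then show ?thesis by (rule LIMSEQ_Suc)
  qed
  have inner: "(\<Sum>j<Suc m. \<Delta> / real (Suc m) *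
            (Y (real (k * Suc m) * (\<Delta> / real (Suc m))) - Y (real (k * Suc m + j) * (\<Delta> / real (Suc m)))))
        = \<Delta> * Y (real k * \<Delta>) - R k (Suc m)" for k m
  proof -
    have e1: "real (k * Suc m) * (\<Delta> / real (Suc m)) = real k * \<Delta>" by (simp add: field_simps)
    have e2: "real (k * Suc m + j) * (\<Delta> / real (Suc m)) = real k * \<Delta> + real j * (\<Delta> / real (Suc m))" for j
      by (simp add: field_simps)
    have e3: "real (Suc k) * \<Delta> - real k * \<Delta> = \<Delta>" by (simp add: algebra_simps)
    have "(\<Sum>j<Suc m. \<Delta> / real (Suc m) * Y (real k * \<Delta>)) = \<Delta> * Y (real k * \<Delta>)" by simp
    then show ?thesis unfolding R_def e1 e2 e3
      by (simp add: right_diff_distrib sum_subtractf)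
  qed
  have lim: "(\<lambda>m. 1 / sqrt T * (\<Sum>k<n. \<Delta> * Y (real k * \<Delta>) - R k (Suc m)))
        \<longlonglongrightarrow> 1 / sqrt T * (\<Sum>k<n. \<Delta> * Y (real k * \<Delta>) - integral {real k * \<Delta>..real (Suc k) * \<Delta>} Y)"
    by (intro tendsto_intros Rlim) simp
  have I: "(\<Sum>k<n. integral {real k * \<Delta>..real (Suc k) * \<Delta>} Y) = integral {0..T} Y"
    using integral_split_cells[of \<Delta> 0 n Y] D cont by (simp add: T_def)
  have c: "1 / sqrt T * \<Delta> = sqrt T / real n"
  proof -
    have e: "real n * \<Delta> = sqrt T * sqrt T" using Tp by (simp add: T_def)
    have sp: "sqrt T > 0" using Tp by simp
    have np: "real n > 0" using n by simp
    have "1 / sqrt T * \<Delta> * real n = sqrt T" using e sp by (simp add: field_simps)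
    then show ?thesis using np by (simp add: field_simps)
  qed
  have "1 / sqrt T * (\<Sum>k<n. \<Delta> * Y (real k * \<Delta>) - integral {real k * \<Delta>..real (Suc k) * \<Delta>} Y)
     = (1 / sqrt T * \<Delta>) * (\<Sum>k<n. Y (real k * \<Delta>)) - 1 / sqrt T * (\<Sum>k<n. integral {real k * \<Delta>..real (Suc k) * \<Delta>} Y)"
    by (simp only: sum_subtractf right_diff_distrib sum_distrib_left mult.assoc)
  also have "\<dots> = sqrt T / real n * (\<Sum>k<n. Y (real k * \<Delta>)) - 1 / sqrt T * integral {0..T} Y"
    unfolding c I ..
  finally have "(\<lambda>m. 1 / sqrt T * (\<Sum>k<n. \<Delta> * Y (real k * \<Delta>) - R k (Suc m)))
        \<longlonglongrightarrow> sqrt T / real n * (\<Sum>k<n. Y (real k * \<Delta>)) - 1 / sqrt T * integral {0..T} Y"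
    using lim by simp
  then show ?thesis unfolding inner T_def .
qed

lemma cs_double:
  fixes x :: "nat \<Rightarrow> nat \<Rightarrow> real"
  assumes w: "w \<ge> 0"
  shows "(\<Sum>k<n. \<Sum>j<p. w * x k j)\<^sup>2 \<le> (real n * real p * w) * (\<Sum>k<n. \<Sum>j<p. w * (x k j)\<^sup>2)"
proof -
  let ?I = "{..<n} \<times> {..<p}"
  have e1: "(\<Sum>k<n. \<Sum>j<p. w * x k j) = (\<Sum>(k, j)\<in>?I. sqrt w * (sqrt w * x k j))"
    using w by (simp add: sum.cartesian_product mult.assoc[symmetric])
  have e2: "(\<Sum>k<n. \<Sum>j<p. w * (x k j)\<^sup>2) = (\<Sum>(k, j)\<in>?I. (sqrt w * x k j)\<^sup>2)"
    using w by (simp add: sum.cartesian_product power_mult_distrib)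
  have e3: "(\<Sum>(k, j)\<in>?I. (sqrt w)\<^sup>2) = real n * real p * w"
    using w by (simp add: case_prod_beta)
  have "(\<Sum>(k, j)\<in>?I. sqrt w * (sqrt w * x k j))\<^sup>2
        \<le> (\<Sum>(k, j)\<in>?I. (sqrt w)\<^sup>2) * (\<Sum>(k, j)\<in>?I. (sqrt w * x k j)\<^sup>2)"
    using Cauchy_Schwarz_ineq_sum[of "\<lambda>(k, j). sqrt w" "\<lambda>(k, j). sqrt w * x k j" ?I]
    by (simp add: case_prod_beta)
  then show ?thesis unfolding e1 e2 e3 .
qed

lemma delta_bound:
  fixes W1 W2 :: "real \<Rightarrow> 'a \<Rightarrow> real"
  assumes B1: "std_brownian_motion M W1" and B2: "std_brownian_motion M W2"
    and ip: "indep_processes M W1 W2" and th: "\<theta> > 0" and n: "n \<ge> 1" and D: "\<Delta> > 0"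
  shows "(\<integral>\<^sup>+\<omega>. ennreal ((delta_err \<theta> W1 W2 \<Delta> n \<omega>)\<^sup>2) \<partial>M) \<le> ennreal (3 * real n * \<Delta>\<^sup>2 / \<theta>)"
proof -
  define T where "T = real n * \<Delta>"
  have Tp: "T > 0" using n D by (simp add: T_def)
  define Y where "Y t \<omega> = ou_process \<theta> W1 t \<omega> * ou_process \<theta> W2 t \<omega>" for t \<omega>
  have Ym: "Y t \<in> borel_measurable M" if "t \<ge> 0" for t
    unfolding Y_def using ou_meas[OF B1 th that] ou_meas[OF B2 th that] by measurable
  define sm where "sm m = \<Delta> / real (Suc m)" for m :: nat
  have smp: "sm m > 0" for m using D by (simp add: sm_def)
  define Dk where "Dk m k j \<omega> = Y (real (k * Suc m) * sm m) \<omega> - Y (real (k * Suc m + j) * sm m) \<omega>" for m k j \<omega>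
  define S where "S m \<omega> = 1 / sqrt T * (\<Sum>k<n. \<Sum>j<Suc m. sm m * Dk m k j \<omega>)" for m \<omega>
  have Dkm: "Dk m k j \<in> borel_measurable M" for m k j
  proof -
    have "Y (real (k * Suc m) * sm m) \<in> borel_measurable M" "Y (real (k * Suc m + j) * sm m) \<in> borel_measurable M"
      using smp[of m] by (auto intro!: Ym)
    then show ?thesis unfolding Dk_def by measurable
  qed
  have Sm: "S m \<in> borel_measurable M" for m
    unfolding S_def by (intro borel_measurable_const borel_measurable_times borel_measurable_sum Dkm)
  have conv: "(\<lambda>m. S m \<omega>) \<longlonglongrightarrow> delta_err \<theta> W1 W2 \<Delta> n \<omega>" if \<omega>: "\<omega> \<in> space M" for \<omega>
  proof -
    have cont: "continuous_on {0..real n * \<Delta>} (\<lambda>t. Y t \<omega>)"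
      unfolding Y_def by (intro continuous_intros ou_continuous bm_cont[OF B1 \<omega>] bm_cont[OF B2 \<omega>])
    show ?thesis
      using delta_limit[OF cont D n]
      unfolding S_def Dk_def sm_def T_def delta_err_def A_riemann_def F_integral_def Y_def .
  qed
  have "(\<integral>\<^sup>+\<omega>. ennreal ((delta_err \<theta> W1 W2 \<Delta> n \<omega>)\<^sup>2) \<partial>M) = (\<integral>\<^sup>+\<omega>. liminf (\<lambda>m. ennreal ((S m \<omega>)\<^sup>2)) \<partial>M)"
  proof (rule nn_integral_cong)
    fix \<omega> assume \<omega>: "\<omega> \<in> space M"
    have "(\<lambda>m. ennreal ((S m \<omega>)\<^sup>2)) \<longlonglongrightarrow> ennreal ((delta_err \<theta> W1 W2 \<Delta> n \<omega>)\<^sup>2)"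
      by (intro tendsto_ennrealI tendsto_intros conv \<omega>)
    then show "ennreal ((delta_err \<theta> W1 W2 \<Delta> n \<omega>)\<^sup>2) = liminf (\<lambda>m. ennreal ((S m \<omega>)\<^sup>2))"
      by (metis lim_imp_Liminf trivial_limit_sequentially)
  qed
  also have "\<dots> \<le> liminf (\<lambda>m. \<integral>\<^sup>+\<omega>. ennreal ((S m \<omega>)\<^sup>2) \<partial>M)"
    by (rule nn_integral_liminf) (use Sm in measurable)
  also have "\<dots> \<le> liminf (\<lambda>m. ennreal (3 * real n * \<Delta>\<^sup>2 / \<theta>))"
  proof (rule Liminf_mono, rule always_eventually, rule allI)
    fix m
    have pw: "ennreal ((S m \<omega>)\<^sup>2) \<le> (\<Sum>k<n. \<Sum>j<Suc m. ennreal (sm m * (Dk m k j \<omega>)\<^sup>2))" for \<omega>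
    proof -
      have cs: "(\<Sum>k<n. \<Sum>j<Suc m. sm m * Dk m k j \<omega>)\<^sup>2 \<le> (real n * real (Suc m) * sm m) * (\<Sum>k<n. \<Sum>j<Suc m. sm m * (Dk m k j \<omega>)\<^sup>2)"
        by (rule cs_double) (use smp[of m] in simp)
      have "real n * real (Suc m) * sm m = T" by (simp add: sm_def T_def)
      then have "(S m \<omega>)\<^sup>2 \<le> (\<Sum>k<n. \<Sum>j<Suc m. sm m * (Dk m k j \<omega>)\<^sup>2)"
        using cs Tp by (simp add: S_def power_mult_distrib power_divide real_sqrt_pow2 divide_le_eq mult.commute)
      then have "ennreal ((S m \<omega>)\<^sup>2) \<le> ennreal (\<Sum>k<n. \<Sum>j<Suc m. sm m * (Dk m k j \<omega>)\<^sup>2)"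
        by (rule ennreal_leI)
      also have "\<dots> = (\<Sum>k<n. ennreal (\<Sum>j<Suc m. sm m * (Dk m k j \<omega>)\<^sup>2))"
        by (rule sum_ennreal[symmetric]) (intro sum_nonneg mult_nonneg_nonneg less_imp_le[OF smp] zero_le_power2)
      also have "\<dots> = (\<Sum>k<n. \<Sum>j<Suc m. ennreal (sm m * (Dk m k j \<omega>)\<^sup>2))"
        by (intro sum.cong refl sum_ennreal[symmetric]) (intro mult_nonneg_nonneg less_imp_le[OF smp] zero_le_power2)
      finally show ?thesis .
    qed
    have Em: "(\<lambda>\<omega>. ennreal (sm m * (Dk m k j \<omega>)\<^sup>2)) \<in> borel_measurable M" for k j
      using Dkm[of m k j] by measurable
    have "(\<integral>\<^sup>+\<omega>. (\<Sum>k<n. \<Sum>j<Suc m. ennreal (sm m * (Dk m k j \<omega>)\<^sup>2)) \<partial>M)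
        = (\<Sum>k<n. \<integral>\<^sup>+\<omega>. (\<Sum>j<Suc m. ennreal (sm m * (Dk m k j \<omega>)\<^sup>2)) \<partial>M)"
      by (rule nn_integral_sum) (intro borel_measurable_sum Em)
    also have "\<dots> = (\<Sum>k<n. \<Sum>j<Suc m. \<integral>\<^sup>+\<omega>. ennreal (sm m * (Dk m k j \<omega>)\<^sup>2) \<partial>M)"
      by (intro sum.cong refl nn_integral_sum Em)
    finally have sumeq: "(\<integral>\<^sup>+\<omega>. (\<Sum>k<n. \<Sum>j<Suc m. ennreal (sm m * (Dk m k j \<omega>)\<^sup>2)) \<partial>M)
        = (\<Sum>k<n. \<Sum>j<Suc m. \<integral>\<^sup>+\<omega>. ennreal (sm m * (Dk m k j \<omega>)\<^sup>2) \<partial>M)" .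
    have "(\<integral>\<^sup>+\<omega>. ennreal ((S m \<omega>)\<^sup>2) \<partial>M) \<le> (\<integral>\<^sup>+\<omega>. (\<Sum>k<n. \<Sum>j<Suc m. ennreal (sm m * (Dk m k j \<omega>)\<^sup>2)) \<partial>M)"
      by (rule nn_integral_mono) (rule pw)
    also have "\<dots> = (\<Sum>k<n. \<Sum>j<Suc m. \<integral>\<^sup>+\<omega>. ennreal (sm m * (Dk m k j \<omega>)\<^sup>2) \<partial>M)"
      by (rule sumeq)
    also have "\<dots> \<le> (\<Sum>k<n. \<Sum>j<Suc m. ennreal (sm m * (3 * \<Delta> / \<theta>)))"
    proof (intro sum_mono)
      fix k j assume j: "j \<in> {..<Suc m}"
      have ib: "(\<integral>\<^sup>+\<omega>. ennreal ((Dk m k j \<omega>)\<^sup>2) \<partial>M) \<le> ennreal (3 * ((real (k * Suc m + j) - real (k * Suc m)) * sm m) / \<theta>)"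
        unfolding Dk_def Y_def by (rule incr_bound[OF B1 B2 ip th smp]) simp
      have jb: "3 * ((real (k * Suc m + j) - real (k * Suc m)) * sm m) / \<theta> \<le> 3 * \<Delta> / \<theta>"
      proof -
        have jj: "real j \<le> real (Suc m)" using j by simp
        have "real j * sm m \<le> real (Suc m) * sm m" by (rule mult_right_mono[OF jj less_imp_le[OF smp]])
        also have "real (Suc m) * sm m = \<Delta>" by (simp add: sm_def)
        finally have "real j * sm m \<le> \<Delta>" .
        then show ?thesis using th by (simp add: divide_right_mono)
      qed
      have "(\<integral>\<^sup>+\<omega>. ennreal (sm m * (Dk m k j \<omega>)\<^sup>2) \<partial>M) = ennreal (sm m) * (\<integral>\<^sup>+\<omega>. ennreal ((Dk m k j \<omega>)\<^sup>2) \<partial>M)"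
        using smp[of m] Dkm[of m k j] by (simp add: ennreal_mult nn_integral_cmult)
      also have "\<dots> \<le> ennreal (sm m) * ennreal (3 * \<Delta> / \<theta>)"
        by (intro mult_left_mono order_trans[OF ib ennreal_leI[OF jb]]) simp
      also have "\<dots> = ennreal (sm m * (3 * \<Delta> / \<theta>))"
        by (rule ennreal_mult[symmetric]) (use smp[of m] th D in auto)
      finally show "(\<integral>\<^sup>+\<omega>. ennreal (sm m * (Dk m k j \<omega>)\<^sup>2) \<partial>M) \<le> ennreal (sm m * (3 * \<Delta> / \<theta>))" .
    qed
    also have "\<dots> = (\<Sum>k<n. ennreal (\<Sum>j<Suc m. sm m * (3 * \<Delta> / \<theta>)))"
      by (intro sum.cong refl sum_ennreal) (use smp[of m] th D in auto)
    also have "\<dots> = ennreal (\<Sum>k<n. \<Sum>j<Suc m. sm m * (3 * \<Delta> / \<theta>))"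
      by (rule sum_ennreal) (use smp[of m] th D in \<open>auto intro!: sum_nonneg\<close>)
    also have "(\<Sum>k<n. \<Sum>j<Suc m. sm m * (3 * \<Delta> / \<theta>)) = real n * real (Suc m) * (sm m * (3 * \<Delta> / \<theta>))"
      by (simp only: sum_constant card_lessThan)
    also have "real n * real (Suc m) * (sm m * (3 * \<Delta> / \<theta>)) = 3 * real n * \<Delta>\<^sup>2 / \<theta>"
      by (simp add: sm_def power2_eq_square)
    finally show "(\<integral>\<^sup>+\<omega>. ennreal ((S m \<omega>)\<^sup>2) \<partial>M) \<le> ennreal (3 * real n * \<Delta>\<^sup>2 / \<theta>)" .
  qed
  also have "\<dots> = ennreal (3 * real n * \<Delta>\<^sup>2 / \<theta>)"
    by (rule lim_imp_Liminf) auto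
  finally show ?thesis .
qed

theorem lemma4p1:
  fixes M :: "'a measure" and W1 W2 :: "real \<Rightarrow> 'a \<Rightarrow> real"
    and \<theta> :: real and \<Delta> :: "nat \<Rightarrow> real"
  assumes "\<theta> > 0"
    and "std_brownian_motion M W1" and "std_brownian_motion M W2"
    and "indep_processes M W1 W2"
    and "\<And>n. n \<ge> 1 \<Longrightarrow> \<Delta> n > 0"
    and "\<Delta> \<longlonglongrightarrow> 0"
    and "filterlim (\<lambda>n. real n * \<Delta> n) at_top sequentially"
  shows "(\<forall>n\<ge>1. \<Delta> n \<le> 1 \<longrightarrow>
            (\<integral>\<^sup>+ \<omega>. ennreal ((delta_err \<theta> W1 W2 (\<Delta> n) n \<omega>)\<^sup>2) \<partial>M)
              \<le> ennreal (C_theta \<theta> * real n * (\<Delta> n)\<^sup>2))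
       \<and> ((\<lambda>n. real n * (\<Delta> n)\<^sup>2) \<longlonglongrightarrow> 0 \<longrightarrow>
            (\<lambda>n. \<integral>\<^sup>+ \<omega>. ennreal ((delta_err \<theta> W1 W2 (\<Delta> n) n \<omega>)\<^sup>2) \<partial>M) \<longlonglongrightarrow> 0)"
proof -
  note th = assms(1) and B1 = assms(2) and B2 = assms(3) and ip = assms(4) and Dp = assms(5)
  have main: "(\<integral>\<^sup>+ \<omega>. ennreal ((delta_err \<theta> W1 W2 (\<Delta> n) n \<omega>)\<^sup>2) \<partial>M) \<le> ennreal (3 / \<theta> * (real n * (\<Delta> n)\<^sup>2))"
    if n: "n \<ge> 1" for n
  proof -
    have "(\<integral>\<^sup>+ \<omega>. ennreal ((delta_err \<theta> W1 W2 (\<Delta> n) n \<omega>)\<^sup>2) \<partial>M) \<le> ennreal (3 * real n * (\<Delta> n)\<^sup>2 / \<theta>)"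
      by (rule delta_bound[OF B1 B2 ip th n Dp[OF n]])
    also have "3 * real n * (\<Delta> n)\<^sup>2 / \<theta> = 3 / \<theta> * (real n * (\<Delta> n)\<^sup>2)" by simp
    finally show ?thesis .
  qed
  have C: "3 / \<theta> \<le> C_theta \<theta>"
  proof -
    have "8 / (9 * \<theta>) \<le> max (8 / (9 * \<theta>)) (max (sqrt 2 / 3 * \<theta> powr (-1/2)) (1/4))" by simp
    moreover have "3 / \<theta> \<le> 4 * (8 / (9 * \<theta>))" using th by (simp add: field_simps)
    ultimately show ?thesis unfolding C_theta_def by linarith
  qed
  show ?thesis
  proof (intro conjI allI impI)
    fix n :: nat assume n: "n \<ge> 1" and "\<Delta> n \<le> 1"
    have "3 / \<theta> * (real n * (\<Delta> n)\<^sup>2) \<le> C_theta \<theta> * (real n * (\<Delta> n)\<^sup>2)"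
      by (rule mult_right_mono[OF C]) simp
    then have "ennreal (3 / \<theta> * (real n * (\<Delta> n)\<^sup>2)) \<le> ennreal (C_theta \<theta> * real n * (\<Delta> n)\<^sup>2)"
      by (intro ennreal_leI) (simp add: mult.assoc)
    with main[OF n] show "(\<integral>\<^sup>+ \<omega>. ennreal ((delta_err \<theta> W1 W2 (\<Delta> n) n \<omega>)\<^sup>2) \<partial>M) \<le> ennreal (C_theta \<theta> * real n * (\<Delta> n)\<^sup>2)"
      by (rule order_trans)
  next
    assume lim: "(\<lambda>n. real n * (\<Delta> n)\<^sup>2) \<longlonglongrightarrow> 0"
    have up: "(\<lambda>n. ennreal (3 / \<theta> * (real n * (\<Delta> n)\<^sup>2))) \<longlonglongrightarrow> 0"
    proof -
      have "(\<lambda>n. ennreal (3 / \<theta> * (real n * (\<Delta> n)\<^sup>2))) \<longlonglongrightarrow> ennreal (3 / \<theta> * 0)"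
        by (intro tendsto_ennrealI tendsto_mult tendsto_const lim)
      then show ?thesis by simp
    qed
    show "(\<lambda>n. \<integral>\<^sup>+ \<omega>. ennreal ((delta_err \<theta> W1 W2 (\<Delta> n) n \<omega>)\<^sup>2) \<partial>M) \<longlonglongrightarrow> 0"
    proof (rule tendsto_sandwich[OF _ _ tendsto_const up])
      show "\<forall>\<^sub>F n in sequentially. (0::ennreal) \<le> (\<integral>\<^sup>+ \<omega>. ennreal ((delta_err \<theta> W1 W2 (\<Delta> n) n \<omega>)\<^sup>2) \<partial>M)"
        by simp
      show "\<forall>\<^sub>F n in sequentially. (\<integral>\<^sup>+ \<omega>. ennreal ((delta_err \<theta> W1 W2 (\<Delta> n) n \<omega>)\<^sup>2) \<partial>M) \<le> ennreal (3 / \<theta> * (real n * (\<Delta> n)\<^sup>2))"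
        by (rule eventually_sequentiallyI[of 1]) (rule main)
    qed
  qed
qed

end
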